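(* Let $n\ge0$ and $k\ge1$. For every formula $\alpha$: if $\vDash_{\mathcal{R}_n^k}\alpha$ then $\vdash_{L_n^k}\alpha$.
   Context: Formulas are built from a countable set of propositional variables using unary $\neg,\circ$ and binary $\land,\lor,\to$; $\circ^0\alpha=\alpha$, $\circ^{m+1}\alpha=\circ(\circ^m\alpha)$, $\alpha\leftrightarrow\beta:=(\alpha\to\beta)\land(\beta\to\alpha)$. mbC is the Hilbert calculus with the axiom schemas of a standard axiomatization of positive classical propositional logic in $\land,\lor,\to$, plus (TND) $\alpha\lor\neg\alpha$ and (bc1) $\circ\alpha\to(\alpha\to(\neg\alpha\to\beta))$, modus ponens being the only rule; mbCciw is mbC plus (ciw) $\circ\alpha\lor(\alpha\land\neg\alpha)$. For $n\ge0$, $k\ge1$, $L_n^k$ is mbCciw plus (cc$^n$) $\circ^{n+2}\alpha$, (dn) $\neg\neg\alpha\leftrightarrow\alpha$, and (ip$^j$) $\neg\circ^j\neg\alpha\leftrightarrow\neg\circ^j\alpha$ for each $1\le j<k$. $\mathcal{M}_1$ is the three-valued Nmatrix with values $T,t,F$, designated set $D=\{T,t\}$, and: $\neg T=\{F\}$, $\neg t=\{t\}$, $\neg F=\{T\}$; $\circ T=\circ F=\{T,t\}$, $\circ t=\{F\}$; $x\land y=\{T,t\}$ if $x,y\in D$ else $\{F\}$; $x\lor y=\{T,t\}$ if $x\in D$ or $y\in D$ else $\{F\}$; $x\to y=\{T,t\}$ if $x\notin D$ or $y\in D$ else $\{F\}$. A valuation over $\mathcal{M}_1$ is a map $\vartheta$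 from formulas to $\{T,t,F\}$ respecting these multioperations. $\mathcal{F}_n^k$ is the set of valuations $\vartheta$ over $\mathcal{M}_1$ such that for every formula $\alpha$: (vCc$^n$) if $\vartheta(\circ^n\alpha)\in\{T,F\}$ then $\vartheta(\circ^{n+1}\alpha)=T$; and (vip$^j$) $\vartheta(\circ^j\alpha)=\vartheta(\circ^j\neg\alpha)$ for each $1\le j\le k-1$. $\mathcal{R}_n^k=\langle\mathcal{M}_1,\mathcal{F}_n^k\rangle$, and $\vDash_{\mathcal{R}_n^k}\alpha$ means $\vartheta(\alpha)\in D$ for all $\vartheta\in\mathcal{F}_n^k$. *)

theory Defs
  imports Main
begin

datatype fm = Var nat | Neg fm | Circ fm | And fm fm | Or fm fm | Imp fm fm

definition Iff :: "fm \<Rightarrow> fm \<Rightarrow> fm" where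
  "Iff a b = And (Imp a b) (Imp b a)"

abbreviation circs :: "nat \<Rightarrow> fm \<Rightarrow> fm" where
  "circs m a \<equiv> (Circ ^^ m) a"

inductive Lnk :: "nat \<Rightarrow> nat \<Rightarrow> fm \<Rightarrow> bool" for n k :: nat where
  Ax1: "Lnk n k (Imp a (Imp b a))"
| Ax2: "Lnk n k (Imp (Imp a b) (Imp (Imp a (Imp b c)) (Imp a c)))"
| Ax3: "Lnk n k (Imp a (Imp b (And a b)))"
| Ax4: "Lnk n k (Imp (And a b) a)"
| Ax5: "Lnk n k (Imp (And a b) b)"
| Ax6: "Lnk n k (Imp a (Or a b))"
| Ax7: "Lnk n k (Imp b (Or a b))"
| Ax8: "Lnk n k (Imp (Imp a c) (Imp (Imp b c) (Imp (Or a b) c)))"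
| Ax9: "Lnk n k (Or a (Imp a b))"
| TND: "Lnk n k (Or a (Neg a))"
| bc1: "Lnk n k (Imp (Circ a) (Imp a (Imp (Neg a) b)))"
| ciw: "Lnk n k (Or (Circ a) (And a (Neg a)))"
| cc: "Lnk n k (circs (n + 2) a)"
| dn: "Lnk n k (Iff (Neg (Neg a)) a)"
| ip: "1 \<le> j \<Longrightarrow> j < k \<Longrightarrow> Lnk n k (Iff (Neg (circs j (Neg a))) (Neg (circs j a)))"
| MP: "Lnk n k a \<Longrightarrow> Lnk n k (Imp a b) \<Longrightarrow> Lnk n k b"

datatype tv = TT | tt | FF

definition designated :: "tv set" where "designated = {TT, tt}"

fun negM :: "tv \<Rightarrow> tv set" where
  "negM TT = {FF}" | "negM tt = {tt}" | "negM FF = {TT}"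

fun circM :: "tv \<Rightarrow> tv set" where
  "circM TT = {TT, tt}" | "circM tt = {FF}" | "circM FF = {TT, tt}"

definition andM :: "tv \<Rightarrow> tv \<Rightarrow> tv set" where
  "andM x y = (if x \<in> designated \<and> y \<in> designated then {TT, tt} else {FF})"

definition orM :: "tv \<Rightarrow> tv \<Rightarrow> tv set" where
  "orM x y = (if x \<in> designated \<or> y \<in> designated then {TT, tt} else {FF})"

definition impM :: "tv \<Rightarrow> tv \<Rightarrow> tv set" where
  "impM x y = (if x \<notin> designated \<or> y \<in> designated then {TT, tt} else {FF})"

definition valuation :: "(fm \<Rightarrow> tv) \<Rightarrow> bool" where
  "valuation v \<longleftrightarrow>
     (\<forall>a. v (Neg a) \<in> negM (v a)) \<and>
     (\<forall>a. v (Circ a) \<in> circM (v a)) \<and>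
     (\<forall>a b. v (And a b) \<in> andM (v a) (v b)) \<and>
     (\<forall>a b. v (Or a b) \<in> orM (v a) (v b)) \<and>
     (\<forall>a b. v (Imp a b) \<in> impM (v a) (v b))"

definition Fnk :: "nat \<Rightarrow> nat \<Rightarrow> (fm \<Rightarrow> tv) set" where
  "Fnk n k = {v. valuation v \<and>
     (\<forall>a. v (circs n a) \<in> {TT, FF} \<longrightarrow> v (circs (n + 1) a) = TT) \<and>
     (\<forall>a j. 1 \<le> j \<and> j \<le> k - 1 \<longrightarrow> v (circs j a) = v (circs j (Neg a)))}"

definition valid_Rnk :: "nat \<Rightarrow> nat \<Rightarrow> fm \<Rightarrow> bool" where
  "valid_Rnk n k a \<longleftrightarrow> (\<forall>v \<in> Fnk n k. v a \<in> designated)"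

end

theory Submission
  imports Defs
begin

inductive Der :: "nat \<Rightarrow> nat \<Rightarrow> fm set \<Rightarrow> fm \<Rightarrow> bool" for n k :: nat where
  hyp: "a \<in> G \<Longrightarrow> Der n k G a"
| ax: "Lnk n k a \<Longrightarrow> Der n k G a"
| mp: "Der n k G a \<Longrightarrow> Der n k G (Imp a b) \<Longrightarrow> Der n k G b"

lemma Der_empty: "Der n k G a \<Longrightarrow> G = {} \<Longrightarrow> Lnk n k a"
  by (induction rule: Der.induct) (auto intro: Lnk.MP)

lemma Der_mono: "Der n k G a \<Longrightarrow> G \<subseteq> H \<Longrightarrow> Der n k H a"
  by (induction rule: Der.induct) (auto intro: Der.intros)

lemma Der_finite: "Der n k G a \<Longrightarrow> \<exists>F. finite F \<and> F \<subseteq> G \<and> Der n k F a"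
proof (induction rule: Der.induct)
  case (hyp a G)
  then show ?case by (intro exI[of _ "{a}"]) (auto intro: Der.hyp)
next
  case (ax a G)
  then show ?case by (intro exI[of _ "{}"]) (auto intro: Der.ax)
next
  case (mp G a b)
  then obtain F1 F2 where "finite F1" "F1 \<subseteq> G" "Der n k F1 a" "finite F2" "F2 \<subseteq> G" "Der n k F2 (Imp a b)"
    by blast
  then show ?case
    by (intro exI[of _ "F1 \<union> F2"]) (auto intro: Der.mp Der_mono)
qed

lemma L_id: "Lnk n k (Imp a a)"
proof -
  have 1: "Lnk n k (Imp (Imp a (Imp a a)) (Imp (Imp a (Imp (Imp a a) a)) (Imp a a)))" by (rule Lnk.Ax2)
  have 2: "Lnk n k (Imp a (Imp a a))" by (rule Lnk.Ax1)
  have 3: "Lnk n k (Imp a (Imp (Imp a a) a))" by (rule Lnk.Ax1)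
  show ?thesis using Lnk.MP[OF 3 Lnk.MP[OF 2 1]] .
qed

lemma deduction: "Der n k (insert b G) c \<Longrightarrow> Der n k G (Imp b c)"
proof (induction "insert b G" c rule: Der.induct)
  case (hyp a)
  then show ?case
  proof
    assume "a = b" then show ?thesis by (auto intro: Der.ax L_id)
  next
    assume "a \<in> G" then show ?thesis by (meson Der.hyp Der.ax Der.mp Lnk.Ax1)
  qed
next
  case (ax a)
  then show ?case by (meson Der.ax Der.mp Lnk.Ax1)
next
  case (mp a c)
  then show ?case by (meson Der.ax Der.mp Lnk.Ax2)
qed

lemma Der_ax: "Lnk n k a \<Longrightarrow> Der n k G a" by (rule Der.ax)

locale maxnt =
  fixes n k :: nat and \<alpha> :: fm and D :: "fm set"
  assumes notder: "\<not> Der n k D \<alpha>"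
  and maxi: "\<And>X. \<not> Der n k X \<alpha> \<Longrightarrow> D \<subseteq> X \<Longrightarrow> X = D"
begin

lemma closed: "Der n k D b \<Longrightarrow> b \<in> D"
proof (rule ccontr)
  assume d: "Der n k D b" and nb: "b \<notin> D"
  have "Der n k (insert b D) \<alpha>" using maxi[of "insert b D"] nb by blast
  then have "Der n k D (Imp b \<alpha>)" by (rule deduction)
  then show False using d notder Der.mp by blast
qed

lemma thm_in: "Lnk n k b \<Longrightarrow> b \<in> D" by (rule closed, rule Der.ax)

lemma mpD: "a \<in> D \<Longrightarrow> Imp a b \<in> D \<Longrightarrow> b \<in> D"
  by (rule closed, rule Der.mp[OF Der.hyp Der.hyp])

lemma notin_imp: "b \<notin> D \<Longrightarrow> Der n k D (Imp b \<alpha>)"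
proof -
  assume nb: "b \<notin> D"
  have "Der n k (insert b D) \<alpha>" using maxi[of "insert b D"] nb by blast
  then show ?thesis by (rule deduction)
qed

lemma alpha_notin: "\<alpha> \<notin> D" using notder Der.hyp by blast

lemma or_D: "Or a b \<in> D \<longleftrightarrow> a \<in> D \<or> b \<in> D"
proof
  assume o: "Or a b \<in> D"
  show "a \<in> D \<or> b \<in> D"
  proof (rule ccontr)
    assume "\<not> (a \<in> D \<or> b \<in> D)"
    then have 1: "Der n k D (Imp a \<alpha>)" "Der n k D (Imp b \<alpha>)" using notin_imp by auto
    have "Der n k D (Imp (Imp a \<alpha>) (Imp (Imp b \<alpha>) (Imp (Or a b) \<alpha>)))" by (rule Der.ax, rule Lnk.Ax8)
    then have "Der n k D \<alpha>" using 1 o by (meson Der.hyp Der.mp)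
    then show False using notder by simp
  qed
next
  assume "a \<in> D \<or> b \<in> D"
  then show "Or a b \<in> D" using mpD[OF _ thm_in[OF Lnk.Ax6[of n k a b]]] mpD[OF _ thm_in[OF Lnk.Ax7[of n k b a]]] by blast
qed

lemma and_D: "And a b \<in> D \<longleftrightarrow> a \<in> D \<and> b \<in> D"
  using mpD[OF _ thm_in[OF Lnk.Ax3[of n k a b]]] mpD[OF _ thm_in[OF Lnk.Ax4[of n k a b]]]
    mpD[OF _ thm_in[OF Lnk.Ax5[of n k a b]]] mpD[of b "And a b"] by blast

lemma imp_D: "Imp a b \<in> D \<longleftrightarrow> a \<notin> D \<or> b \<in> D"
proof
  assume "Imp a b \<in> D" then show "a \<notin> D \<or> b \<in> D" using mpD by blast
next
  assume h: "a \<notin> D \<or> b \<in> D"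
  have "Or a (Imp a b) \<in> D" by (rule thm_in, rule Lnk.Ax9)
  then show "Imp a b \<in> D" using h or_D[of a "Imp a b"] mpD[OF _ thm_in[OF Lnk.Ax1[of n k b a]]] by blast
qed

lemma iff_D: "Iff a b \<in> D \<Longrightarrow> a \<in> D \<longleftrightarrow> b \<in> D"
  unfolding Iff_def using and_D[of "Imp a b" "Imp b a"] imp_D[of a b] imp_D[of b a] by blast

lemma tnd: "a \<notin> D \<Longrightarrow> Neg a \<in> D"
  using or_D[of a "Neg a"] thm_in[OF Lnk.TND] by blast

lemma explode: "Circ a \<in> D \<Longrightarrow> a \<in> D \<Longrightarrow> Neg a \<in> D \<Longrightarrow> False"
  using mpD[OF _ mpD[OF _ mpD[OF _ thm_in[OF Lnk.bc1[of n k a \<alpha>]]]]] alpha_notin by blast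

lemma ciw_D: "Circ a \<in> D \<or> (a \<in> D \<and> Neg a \<in> D)"
  using or_D[of "Circ a" "And a (Neg a)"] and_D[of a "Neg a"] thm_in[OF Lnk.ciw[of n k a]] by blast

lemma dn_D: "Neg (Neg a) \<in> D \<longleftrightarrow> a \<in> D"
  using iff_D thm_in[OF Lnk.dn[of n k a]] by blast

lemma ip_D: "1 \<le> j \<Longrightarrow> j < k \<Longrightarrow> Neg (circs j (Neg a)) \<in> D \<longleftrightarrow> Neg (circs j a) \<in> D"
  using iff_D thm_in[OF Lnk.ip[of j k n a]] by blast

lemma circ_eq: "1 \<le> j \<Longrightarrow> j < k \<Longrightarrow> circs j a \<in> D \<longleftrightarrow> circs j (Neg a) \<in> D"
proof (induction j)
  case 0
  then show ?case by simp
next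
  case (Suc j)
  show ?case
  proof (cases "j = 0")
    case True
    then show ?thesis using ciw_D[of "Neg a"] ciw_D[of a] dn_D[of a] explode[of a] explode[of "Neg a"]
      by auto
  next
    case False
    then have ih: "circs j a \<in> D \<longleftrightarrow> circs j (Neg a) \<in> D" using Suc by auto
    have ip: "Neg (circs j (Neg a)) \<in> D \<longleftrightarrow> Neg (circs j a) \<in> D" using ip_D[of j a] Suc False by auto
    show ?thesis using ih ip ciw_D[of "circs j a"] ciw_D[of "circs j (Neg a)"]
        explode[of "circs j a"] explode[of "circs j (Neg a)"] by auto
  qed
qed

definition v :: "fm \<Rightarrow> tv" where
  "v b = (if b \<in> D then (if Neg b \<in> D then tt else TT) else FF)"

lemma v_valuation: "valuation v"
  unfolding valuation_def
proof (intro conjI allI)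
  fix a
  show "v (Neg a) \<in> negM (v a)"
    using dn_D[of a] tnd[of a] by (auto simp: v_def)
  show "v (Circ a) \<in> circM (v a)"
    using ciw_D[of a] explode[of a] by (auto simp: v_def)
next
  fix a b
  show "v (And a b) \<in> andM (v a) (v b)"
    using and_D[of a b] tnd[of "And a b"] by (auto simp: v_def andM_def designated_def)
  show "v (Or a b) \<in> orM (v a) (v b)"
    using or_D[of a b] tnd[of "Or a b"] by (auto simp: v_def orM_def designated_def)
  show "v (Imp a b) \<in> impM (v a) (v b)"
    using imp_D[of a b] tnd[of "Imp a b"] by (auto simp: v_def impM_def designated_def)
qed

lemma v_Fnk: "v \<in> Fnk n k"
  unfolding Fnk_def
proof (intro CollectI conjI allI impI v_valuation)
  fix a
  assume h: "v (circs n a) \<in> {TT, FF}"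
  let ?g = "circs n a"
  have cc: "Circ (Circ ?g) \<in> D" using thm_in[OF Lnk.cc[of n k a]] by (simp only: add_2_eq_Suc' funpow.simps o_apply)
  have "\<not> (?g \<in> D \<and> Neg ?g \<in> D)" using h by (auto simp: v_def)
  then have c: "Circ ?g \<in> D" using ciw_D[of ?g] by blast
  then have "Neg (Circ ?g) \<notin> D" using cc explode[of "Circ ?g"] by blast
  then show "v (circs (n + 1) a) = TT" using c unfolding v_def by (simp only: Suc_eq_plus1[symmetric] funpow.simps o_apply if_True if_False)
next
  fix a j
  assume h: "1 \<le> j \<and> j \<le> k - 1"
  then have j: "1 \<le> j" "j < k" by auto
  show "v (circs j a) = v (circs j (Neg a))"
    using circ_eq[OF j, of a] ip_D[OF j, of a] unfolding v_def by (simp only:)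
qed

end

theorem theorem27:
  fixes n k :: nat and \<alpha> :: fm
  assumes "k \<ge> 1"
  shows "valid_Rnk n k \<alpha> \<Longrightarrow> Lnk n k \<alpha>"
proof (rule ccontr)
  assume val: "valid_Rnk n k \<alpha>" and np: "\<not> Lnk n k \<alpha>"
  let ?A = "{G. \<not> Der n k G \<alpha>}"
  have "\<forall>C\<in>chains ?A. \<Union>C \<in> ?A"
  proof
    fix C assume C: "C \<in> chains ?A"
    show "\<Union>C \<in> ?A"
    proof (cases "C = {}")
      case True
      have "\<not> Der n k {} \<alpha>" using np Der_empty[of n k "{}" \<alpha>] by blast
      then show ?thesis using True by simp
    next
      case False
      show ?thesis
      proof (rule CollectI, rule notI)
        assume "Der n k (\<Union>C) \<alpha>"
        then obtain F where F: "finite F" "F \<subseteq> \<Union>C" "Der n k F \<alpha>" using Der_finite[of n k "\<Union>C" \<alpha>] by blast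
        have "subset.chain ?A C" using C by (simp add: chains_alt_def)
        then obtain B where "B \<in> C" "F \<subseteq> B" using finite_subset_Union_chain[OF F(1) F(2) False] by blast
        then have "Der n k B \<alpha>" using Der_mono[OF F(3)] by blast
        moreover have "B \<in> ?A" using C \<open>B \<in> C\<close> unfolding chains_def by blast
        ultimately show False by simp
      qed
    qed
  qed
  then obtain M where M: "M \<in> ?A" "\<forall>X\<in>?A. M \<subseteq> X \<longrightarrow> X = M" using Zorn_Lemma[of ?A] by blast
  interpret maxnt n k \<alpha> M proof
    show "\<not> Der n k M \<alpha>" using M(1) by simp
    show "\<And>X. \<not> Der n k X \<alpha> \<Longrightarrow> M \<subseteq> X \<Longrightarrow> X = M" using M(2) by simp
  qed
  have "v \<in> Fnk n k" by (rule v_Fnk)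
  then have "v \<alpha> \<in> designated" using val by (simp add: valid_Rnk_def)
  then show False using alpha_notin by (simp add: v_def designated_def)
qed

end
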